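(* Let $\beta\in(\frac{1+\sqrt5}{2},2)$. Suppose the quasi-greedy orbit of $1$ hits $\beta^{-1}(\beta-1)^{-1}$ for the first time, i.e. there is a minimal $k\ge1$ with $Q^k(1)=\beta^{-1}(\beta-1)^{-1}$ and $Q^i(1)\in[0,\beta^{-1})\cup(\beta^{-1}(\beta-1)^{-1},(\beta-1)^{-1}]$ for $1\le i\le k-1$. Then the greedy $\beta$-expansion of $1$ is finite, and there exist $n_0\ge1$ and a word $a_1\cdots a_{n_0}\in\{0,1\}^{n_0}$ with $a_{n_0}=1$ such that the quasi-greedy expansion of $1$ is $(\eta_i)=\big(a_1\cdots a_{n_0}\,\overline{a_1\cdots a_{n_0}}\big)^\infty$.
   Context: For $x\in[0,(\beta-1)^{-1}]$, a $\beta$-expansion of $x$ is $(a_n)\in\{0,1\}^{\mathbb{N}}$ with $x=\sum_n a_n\beta^{-n}$. The greedy map $G$ on $[0,(\beta-1)^{-1}]$ is $G(x)=\beta x \bmod 1$ for $x\in[0,1)$ and $G(x)=\beta x-1$ for $x\in[1,(\beta-1)^{-1}]$; the greedy expansion of $x$ has digits $a_n=\lfloor\beta G^{n-1}(x)\rfloor$. The quasi-greedy expansion $(\eta_i)$ of $1$ equals the greedy expansion of $1$ if the latter is infinite (does not end in $0^\infty$); if the greedy expansion is $a_1\cdots a_n0^\infty$ with $a_n=1$, then $(\eta_i)=(a_1\cdots a_{n-1}(a_n-1))^\infty$. The quasi-greedy orbit of $1$ is $Q^i(1)=\sum_{j\ge1}\eta_{i+j}\beta^{-j}$, $i\ge1$.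 For a word or sequence, the bar denotes the reflection $\overline{a}=1-a$ applied digitwise. *)

theory Defs
  imports Complex_Main
begin

definition greedy_map :: "real \<Rightarrow> real \<Rightarrow> real" where
  "greedy_map \<beta> x = (if x < 1 then \<beta> * x - of_int \<lfloor>\<beta> * x\<rfloor> else \<beta> * x - 1)"

text \<open>Greedy digits a_n = floor(beta G^(n-1) x), indexed from n = 1.\<close>
definition greedy_digit :: "real \<Rightarrow> real \<Rightarrow> nat \<Rightarrow> nat" where
  "greedy_digit \<beta> x n = nat \<lfloor>\<beta> * (greedy_map \<beta> ^^ (n - 1)) x\<rfloor>"

definition greedy_finite :: "real \<Rightarrow> bool" where
  "greedy_finite \<beta> \<longleftrightarrow> (\<exists>N. \<forall>n>N. greedy_digit \<beta> 1 n = 0)"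

definition greedy_len :: "real \<Rightarrow> nat" where
  "greedy_len \<beta> = (GREATEST n. n \<ge> 1 \<and> greedy_digit \<beta> 1 n \<noteq> 0)"

text \<open>Quasi-greedy expansion (eta_i) of 1, indexed from i = 1.\<close>
definition quasi_greedy :: "real \<Rightarrow> nat \<Rightarrow> nat" where
  "quasi_greedy \<beta> i =
     (if greedy_finite \<beta> then
        (let n = greedy_len \<beta>; j = (i - 1) mod n + 1 in
         if j = n then greedy_digit \<beta> 1 n - 1 else greedy_digit \<beta> 1 j)
      else greedy_digit \<beta> 1 i)"

definition Qorb :: "real \<Rightarrow> nat \<Rightarrow> real" where
  "Qorb \<beta> i = (\<Sum>j. real (quasi_greedy \<beta> (i + j + 1)) / \<beta> ^ (j + 1))"

end

theory Submission
  imports Defs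
begin

definition gx :: "real \<Rightarrow> nat \<Rightarrow> real" where
  "gx \<beta> n = (greedy_map \<beta> ^^ n) 1"

lemma gx_0: "gx \<beta> 0 = 1" by (simp add: gx_def)

lemma gx_Suc: "gx \<beta> (Suc n) = greedy_map \<beta> (gx \<beta> n)" by (simp add: gx_def)

lemma gd_Suc: "greedy_digit \<beta> 1 (Suc n) = nat \<lfloor>\<beta> * gx \<beta> n\<rfloor>"
  by (simp add: greedy_digit_def gx_def)

lemma gx_bounds:
  assumes "1 < \<beta>" "\<beta> < 2" "1 \<le> n"
  shows "0 \<le> gx \<beta> n \<and> gx \<beta> n < 1"
  using assms(3)
proof (induction n)
  case 0 then show ?case by simp
next
  case (Suc m)
  show ?case
  proof (cases "m = 0")
    case True
    then show ?thesis using assms by (simp add: gx_Suc gx_0 greedy_map_def)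
  next
    case False
    then have "0 \<le> gx \<beta> m \<and> gx \<beta> m < 1" using Suc by simp
    have a: "\<beta> * gx \<beta> m - of_int \<lfloor>\<beta> * gx \<beta> m\<rfloor> < 1"
      using real_of_int_floor_add_one_gt[of "\<beta> * gx \<beta> m"] by linarith
    have b: "0 \<le> \<beta> * gx \<beta> m - of_int \<lfloor>\<beta> * gx \<beta> m\<rfloor>"
      using of_int_floor_le[of "\<beta> * gx \<beta> m"] by linarith
    show ?thesis using a b \<open>0 \<le> gx \<beta> m \<and> gx \<beta> m < 1\<close>
      by (simp add: gx_Suc greedy_map_def)
  qed
qed

lemma gx_le1:
  assumes "1 < \<beta>" "\<beta> < 2"
  shows "0 \<le> gx \<beta> n \<and> gx \<beta> n \<le> 1"
  using gx_bounds[OF assms, of n] by (cases n) (auto simp: gx_0)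

lemma gd_le1:
  assumes "1 < \<beta>" "\<beta> < 2"
  shows "greedy_digit \<beta> 1 (Suc n) \<le> 1"
proof -
  have h: "0 \<le> gx \<beta> n \<and> gx \<beta> n \<le> 1" using gx_le1[OF assms] .
  have "\<beta> * gx \<beta> n < 2"
  proof -
    have "\<beta> * gx \<beta> n \<le> \<beta> * 1" using h assms by (intro mult_left_mono) auto
    then show ?thesis using assms by linarith
  qed
  then have "\<lfloor>\<beta> * gx \<beta> n\<rfloor> \<le> 1" by (simp add: floor_le_iff)
  then show ?thesis unfolding gd_Suc by (simp add: nat_le_iff)
qed

lemma gx_rec:
  assumes "1 < \<beta>" "\<beta> < 2"
  shows "gx \<beta> (Suc n) = \<beta> * gx \<beta> n - real (greedy_digit \<beta> 1 (Suc n))"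
proof (cases "gx \<beta> n < 1")
  case True
  have "0 \<le> gx \<beta> n" using gx_le1[OF assms] by blast
  then have "0 \<le> \<lfloor>\<beta> * gx \<beta> n\<rfloor>" using assms by simp
  then show ?thesis using True by (simp add: gx_Suc gd_Suc greedy_map_def)
next
  case False
  then have "gx \<beta> n = 1" using gx_le1[OF assms, of n] by simp
  moreover have "\<lfloor>\<beta>\<rfloor> = 1" using assms by (simp add: floor_eq_iff)
  ultimately show ?thesis by (simp add: gx_Suc gd_Suc greedy_map_def)
qed

lemma gx_zero:
  assumes "1 < \<beta>" "\<beta> < 2" "gx \<beta> n = 0"
  shows "gx \<beta> (n + j) = 0 \<and> greedy_digit \<beta> 1 (Suc (n + j)) = 0"
proof (induction j)
  case 0 then show ?case using assms by (simp add: gd_Suc)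
next
  case (Suc j)
  then show ?case using gx_rec[OF assms(1,2), of "n+j"] by (simp add: gd_Suc)
qed

lemma series_eq:
  fixes \<beta> :: real and e :: "nat \<Rightarrow> nat" and y :: "nat \<Rightarrow> real"
  assumes b: "1 < \<beta>" and he: "\<And>n. e (Suc n) \<le> 1"
    and hy: "\<And>n. y (Suc n) = \<beta> * y n - real (e (Suc n))"
    and hb: "\<And>n. 0 \<le> y n \<and> y n \<le> 1"
  shows "(\<Sum>j. real (e (n + j + 1)) / \<beta> ^ (j + 1)) = y n"
proof -
  define S where "S n = (\<Sum>j. real (e (n + j + 1)) / \<beta> ^ (j + 1))" for n
  define G where "G = (\<Sum>j. (1/\<beta>) ^ j)"
  have gs: "summable (\<lambda>j. (1/\<beta>) ^ j)" using b by (intro summable_geometric) simp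
  have fb: "0 \<le> real (e (n + j + 1)) / \<beta> ^ (j + 1) \<and> real (e (n + j + 1)) / \<beta> ^ (j + 1) \<le> (1/\<beta>) ^ j" for n j
  proof -
    have "real (e (n + j + 1)) \<le> 1" using he[of "n+j"] by simp
    then have "real (e (n + j + 1)) / \<beta> ^ (j + 1) \<le> 1 / \<beta> ^ (j+1)"
      using b by (intro divide_right_mono) auto
    also have "\<dots> \<le> 1 / \<beta> ^ j" using b
      by (intro divide_left_mono) (auto simp: power_increasing)
    finally show ?thesis using b by (simp add: power_one_over)
  qed
  have summ: "summable (\<lambda>j. real (e (n + j + 1)) / \<beta> ^ (j + 1))" for n
  proof (rule summable_comparison_test[OF _ gs], intro exI[of _ 0] allI impI)
    fix j :: nat
    show "norm (real (e (n + j + 1)) / \<beta> ^ (j + 1)) \<le> (1/\<beta>) ^ j"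
      using fb[of n j] by (metis abs_of_nonneg real_norm_def)
  qed
  have Sb: "0 \<le> S n \<and> S n \<le> G" for n
    unfolding S_def G_def using fb summ gs
    by (auto intro!: suminf_nonneg suminf_le)
  have Srec: "S n = (real (e (Suc n)) + S (Suc n)) / \<beta>" for n
  proof -
    have "(\<Sum>j. real (e (n + Suc j + 1)) / \<beta> ^ (Suc j + 1))
        = (\<Sum>j. real (e (n + j + 1)) / \<beta> ^ (j + 1)) - real (e (n + 0 + 1)) / \<beta> ^ (0 + 1)"
      by (rule suminf_split_head[OF summ])
    moreover have "(\<Sum>j. real (e (n + Suc j + 1)) / \<beta> ^ (Suc j + 1))
        = (\<Sum>j. real (e (Suc n + j + 1)) / \<beta> ^ (j + 1) / \<beta>)"
      by (simp add: algebra_simps)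
    moreover have "(\<Sum>j. real (e (Suc n + j + 1)) / \<beta> ^ (j + 1) / \<beta>) = S (Suc n) / \<beta>"
      unfolding S_def by (rule suminf_divide[OF summ])
    ultimately have "S (Suc n) / \<beta> = S n - real (e (Suc n)) / \<beta>"
      unfolding S_def by simp
    then show ?thesis using b by (simp add: field_simps)
  qed
  define D where "D n = S n - y n" for n
  have Drec: "D (Suc n) = \<beta> * D n" for n
    using Srec[of n] hy[of n] b unfolding D_def by (simp add: field_simps)
  have Dpow: "D (n + m) = \<beta> ^ m * D n" for m
    by (induction m) (auto simp: Drec)
  have Dbd: "\<bar>D m\<bar> \<le> G + 1" for m
    using Sb[of m] hb[of m] unfolding D_def by auto
  have "D n = 0"
  proof (rule ccontr)
    assume nz: "D n \<noteq> 0"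
    obtain m where m: "(G + 1) / \<bar>D n\<bar> < \<beta> ^ m" using real_arch_pow[OF b] by blast
    then have "G + 1 < \<beta> ^ m * \<bar>D n\<bar>" using nz by (simp add: divide_less_eq)
    also have "\<dots> = \<bar>D (n + m)\<bar>" using b by (simp add: Dpow abs_mult)
    finally show False using Dbd[of "n+m"] by simp
  qed
  then show ?thesis unfolding D_def S_def by simp
qed


lemma golden_facts:
  fixes \<beta> :: real
  assumes b1: "(1 + sqrt 5) / 2 < \<beta>"
  shows "1 < \<beta> * (\<beta> - 1)" and "1 < \<beta>"
proof -
  have s: "sqrt 5 ^ 2 = 5" by simp
  have s0: "0 \<le> sqrt 5" by simp
  have h15: "1 + sqrt 5 < 2 * \<beta>" using b1 by (simp add: divide_less_eq mult.commute)
  then have "sqrt 5 < 2 * \<beta> - 1" by linarith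
  then have "sqrt 5 ^ 2 < (2 * \<beta> - 1) ^ 2" using s0 by (intro power_strict_mono) auto
  then have "5 < (2 * \<beta> - 1) ^ 2" using s by simp
  then show *: "1 < \<beta> * (\<beta> - 1)" by (simp add: power2_eq_square algebra_simps)
  have "0 < \<beta>" using h15 s0 by linarith
  then show "1 < \<beta>" using * by (smt (verit) mult_le_cancel_left1)
qed

lemma main_comb:
  fixes \<beta> :: real and e :: "nat \<Rightarrow> nat" and Q :: "nat \<Rightarrow> real" and k :: nat
  assumes b1: "(1 + sqrt 5) / 2 < \<beta>" and b2: "\<beta> < 2"
    and h0: "Q 0 = 1" and hrec: "\<And>n. Q (Suc n) = \<beta> * Q n - real (e (Suc n))"
    and he: "\<And>n. e (Suc n) \<le> 1" and hpos: "\<And>n. 0 < Q n" and hle: "\<And>n. Q n \<le> 1"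
    and hk1: "1 \<le> k" and hkQ: "Q k = 1 / (\<beta> * (\<beta> - 1))"
    and hki0: "\<forall>i. 1 \<le> i \<and> i \<le> k - 1 \<longrightarrow> Q i < 1 / \<beta> \<or> 1 / (\<beta> * (\<beta> - 1)) < Q i"
  shows "e (Suc k) = 1" and "\<And>i. 1 \<le> i \<Longrightarrow> i \<le> k + 1 \<Longrightarrow> e (k + 1 + i) = 1 - e i"
    and "\<And>m. e (Suc m) = e (Suc (m mod (2 * k + 2)))"
    and "Q (2 * k + 2) = 1"
proof -
  have hki: "Q i < 1 / \<beta> \<or> 1 / (\<beta> * (\<beta> - 1)) < Q i" if "1 \<le> i" "i \<le> k - 1" for i
    using hki0 that by blast
  have g1: "1 < \<beta> * (\<beta> - 1)" and bg: "1 < \<beta>" using golden_facts[OF b1] by auto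
  define u where "u = 1 / (\<beta> * (\<beta> - 1))"
  define c where "c = 1 / (\<beta> - 1)"
  have bu: "\<beta> * u = c" unfolding u_def c_def using bg by (simp add: field_simps)
  have bc: "\<beta> * c - 1 = c" unfolding c_def using bg by (simp add: field_simps)
  have cu: "c - 1 / \<beta> = u" unfolding u_def c_def using bg by (simp add: field_simps)
  have u1: "u < 1" unfolding u_def using g1 by simp
  have c1: "1 < c" unfolding c_def using bg b2 by (simp add: field_simps)
  have F0: "e (Suc n) = 0" if "Q n \<le> 1 / \<beta>" for n
  proof (rule ccontr)
    assume "e (Suc n) \<noteq> 0"
    then have "e (Suc n) = 1" using he[of n] by simp
    moreover have "\<beta> * Q n \<le> \<beta> * (1 / \<beta>)" using that bg by (intro mult_left_mono) auto
    ultimately have "Q (Suc n) \<le> 0" using hrec[of n] bg by simp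
    then show False using hpos[of "Suc n"] by simp
  qed
  have F1: "e (Suc n) = 1" if "u \<le> Q n" for n
  proof (rule ccontr)
    assume "e (Suc n) \<noteq> 1"
    then have "e (Suc n) = 0" using he[of n] by simp
    moreover have "\<beta> * u \<le> \<beta> * Q n" using that bg by (intro mult_left_mono) auto
    ultimately have "c \<le> Q (Suc n)" using hrec[of n] bu by simp
    then show False using hle[of "Suc n"] c1 by simp
  qed
  define det where "det x \<longleftrightarrow> x \<le> 1 / \<beta> \<or> u \<le> x" for x
  have detc: "det (c - x)" if "det x" for x
    using that cu unfolding det_def by auto
  have step: "e (Suc p) = e (Suc q) \<and> Q (Suc p) = Q (Suc q)" if "Q p = Q q" "det (Q q)" for p q
  proof -
    have "e (Suc p) = e (Suc q)"
      using that F0[of p] F0[of q] F1[of p] F1[of q] unfolding det_def by auto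
    then show ?thesis using hrec[of p] hrec[of q] that(1) by simp
  qed
  have C1: "det (Q i)" if "i \<le> k" for i
  proof (cases "i = 0 \<or> i = k")
    case True
    then show ?thesis using h0 u1 hkQ unfolding det_def u_def by auto
  next
    case False
    then have "1 \<le> i" "i \<le> k - 1" using that by auto
    then show ?thesis using hki[of i] unfolding det_def u_def by auto
  qed
  have ek: "e (Suc k) = 1" using F1[of k] hkQ unfolding u_def by simp
  then show "e (Suc k) = 1" .
  have Qk1: "Q (Suc k) = c - 1" using hrec[of k] ek hkQ bu bc unfolding u_def by simp
  have C3: "Q (k + 1 + i) = c - Q i \<and> (1 \<le> i \<longrightarrow> e (k + 1 + i) = 1 - e i)" if "i \<le> k" for i
    using that
  proof (induction i)
    case 0 then show ?case using Qk1 h0 by simp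
  next
    case (Suc i)
    then have IH: "Q (k + 1 + i) = c - Q i" by simp
    have dQ: "det (Q i)" using C1 Suc.prems by simp
    show ?case
    proof (cases "Q i \<le> 1 / \<beta>")
      case True
      then have e0: "e (Suc i) = 0" by (rule F0)
      have "u \<le> Q (k + 1 + i)" using IH True cu by linarith
      then have e1: "e (Suc (k + 1 + i)) = 1" by (rule F1)
      have "Q (Suc (k + 1 + i)) = \<beta> * (c - Q i) - 1" using hrec[of "k+1+i"] IH e1 by simp
      also have "\<dots> = c - Q (Suc i)" using hrec[of i] e0 bc by (simp add: algebra_simps)
      finally show ?thesis using e0 e1 by simp
    next
      case False
      then have uQ: "u \<le> Q i" using dQ unfolding det_def by auto
      then have e1: "e (Suc i) = 1" by (rule F1)
      have "Q (k + 1 + i) \<le> 1 / \<beta>" using IH uQ cu by linarith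
      then have e0: "e (Suc (k + 1 + i)) = 0" by (rule F0)
      have "Q (Suc (k + 1 + i)) = \<beta> * (c - Q i)" using hrec[of "k+1+i"] IH e0 by simp
      also have "\<dots> = c - Q (Suc i)" using hrec[of i] e1 bc by (simp add: algebra_simps)
      finally show ?thesis using e0 e1 by simp
    qed
  qed
  have Q2k1: "Q (2 * k + 1) = 1 / \<beta>"
  proof -
    have "Q (k + 1 + k) = c - Q k" using C3[of k] by simp
    moreover have "2 * k + 1 = k + 1 + k" by simp
    ultimately have "Q (2 * k + 1) = c - Q k" by metis
    then show ?thesis using hkQ cu unfolding u_def by linarith
  qed
  have e2k2: "e (2 * k + 2) = 0" using F0[of "2*k+1"] Q2k1 by simp
  have Q2k2: "Q (2 * k + 2) = 1" using hrec[of "2*k+1"] e2k2 Q2k1 bg by simp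
  then show "Q (2 * k + 2) = 1" .
  show "e (k + 1 + i) = 1 - e i" if "1 \<le> i" "i \<le> k + 1" for i
  proof (cases "i = k + 1")
    case True
    moreover have "k + 1 + (k + 1) = 2 * k + 2" by simp
    ultimately show ?thesis using e2k2 ek by (simp add: mult_2)
  next
    case False
    then show ?thesis using C3[of i] that by simp
  qed
  define N where "N = 2 * k + 2"
  have C5: "det (Q i)" if "i < N" for i
  proof (cases "i \<le> k")
    case True then show ?thesis by (rule C1)
  next
    case False
    define j where "j = i - (k + 1)"
    have j: "i = k + 1 + j" "j \<le> k" using that False unfolding N_def j_def by auto
    then show ?thesis using C3[of j] C1[of j] detc by simp
  qed
  have N0: "0 < N" unfolding N_def by simp
  have per: "Q m = Q (m mod N)" for m
  proof (induction m)
    case 0 then show ?case by simp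
  next
    case (Suc m)
    have r: "m mod N < N" using N0 by simp
    have "Q (Suc m) = Q (Suc (m mod N))" using step[OF Suc C5[OF r]] by simp
    then show ?case
      using Q2k2 h0 unfolding N_def by (auto simp: mod_Suc)
  qed
  show "e (Suc m) = e (Suc (m mod (2 * k + 2)))" for m
    using step[OF per[of m] C5] N0 unfolding N_def by simp
qed


theorem lemma3p4:
  fixes \<beta> :: real
  assumes "(1 + sqrt 5) / 2 < \<beta>" and "\<beta> < 2"
    and "\<exists>k\<ge>1. Qorb \<beta> k = 1 / (\<beta> * (\<beta> - 1)) \<and>
           (\<forall>i. 1 \<le> i \<and> i \<le> k - 1 \<longrightarrow>
              (0 \<le> Qorb \<beta> i \<and> Qorb \<beta> i < 1 / \<beta>) \<or>
              (1 / (\<beta> * (\<beta> - 1)) < Qorb \<beta> i \<and> Qorb \<beta> i \<le> 1 / (\<beta> - 1)))"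
  shows "greedy_finite \<beta> \<and>
    (\<exists>n0 \<ge> 1. \<exists>a :: nat \<Rightarrow> nat. (\<forall>i\<in>{1..n0}. a i \<in> {0, 1}) \<and> a n0 = 1 \<and>
       (\<forall>i\<ge>1. quasi_greedy \<beta> i =
          (let j = (i - 1) mod (2 * n0) + 1 in
           if j \<le> n0 then a j else 1 - a (j - n0))))"
proof -
  have bg: "1 < \<beta>" using golden_facts(2)[OF assms(1)] .
  note b2 = assms(2)
  obtain k where hk1: "1 \<le> k" and hkQ: "Qorb \<beta> k = 1 / (\<beta> * (\<beta> - 1))"
    and hki0: "\<forall>i. 1 \<le> i \<and> i \<le> k - 1 \<longrightarrow>
              (0 \<le> Qorb \<beta> i \<and> Qorb \<beta> i < 1 / \<beta>) \<or>
              (1 / (\<beta> * (\<beta> - 1)) < Qorb \<beta> i \<and> Qorb \<beta> i \<le> 1 / (\<beta> - 1))"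
    using assms(3) by blast
  have hki: "\<forall>i. 1 \<le> i \<and> i \<le> k - 1 \<longrightarrow> Qorb \<beta> i < 1 / \<beta> \<or> 1 / (\<beta> * (\<beta> - 1)) < Qorb \<beta> i"
    using hki0 by blast
  have gdl: "greedy_digit \<beta> 1 (Suc n) \<le> Suc 0" for n using gd_le1[OF bg b2, of n] by simp
  have d1: "greedy_digit \<beta> 1 1 = 1"
  proof -
    have "\<lfloor>\<beta>\<rfloor> = 1" using bg b2 by (simp add: floor_eq_iff)
    then show ?thesis using gd_Suc[of \<beta> 0] by (simp add: gx_0)
  qed
  have gf: "greedy_finite \<beta>"
  proof (rule ccontr)
    assume nf: "\<not> greedy_finite \<beta>"
    have eq: "quasi_greedy \<beta> n = greedy_digit \<beta> 1 n" for n
      using nf by (simp add: quasi_greedy_def)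
    have Qx: "Qorb \<beta> n = gx \<beta> n" for n
      unfolding Qorb_def
      by (rule series_eq[OF bg]) (auto simp: eq gdl gx_rec[OF bg b2] gx_le1[OF bg b2])
    have pos: "0 < gx \<beta> n" for n
    proof (rule ccontr)
      assume "\<not> 0 < gx \<beta> n"
      then have "gx \<beta> n = 0" using gx_le1[OF bg b2, of n] by simp
      have "\<forall>m>n. greedy_digit \<beta> 1 m = 0"
      proof (intro allI impI)
        fix m assume "n < m"
        then have "Suc (n + (m - Suc n)) = m" by simp
        then show "greedy_digit \<beta> 1 m = 0"
          using gx_zero[OF bg b2 \<open>gx \<beta> n = 0\<close>, of "m - Suc n"] by simp
      qed
      then show False using nf unfolding greedy_finite_def by blast
    qed
    have q0: "Qorb \<beta> 0 = 1" using Qx gx_0 by simp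
    have qr: "Qorb \<beta> (Suc n) = \<beta> * Qorb \<beta> n - real (quasi_greedy \<beta> (Suc n))" for n
      using Qx gx_rec[OF bg b2] eq by simp
    have qe: "quasi_greedy \<beta> (Suc n) \<le> 1" for n using eq gd_le1[OF bg b2] by simp
    have qp: "0 < Qorb \<beta> n" for n using Qx pos by simp
    have ql: "Qorb \<beta> n \<le> 1" for n using Qx gx_le1[OF bg b2] by simp
    have "Qorb \<beta> (2 * k + 2) = 1"
      by (rule main_comb(4)[OF assms(1,2) q0 qr qe qp ql hk1 hkQ hki])
    then show False using Qx gx_bounds[OF bg b2, of "2*k+2"] by simp
  qed
  define L where "L = greedy_len \<beta>"
  define P where "P n \<longleftrightarrow> 1 \<le> n \<and> greedy_digit \<beta> 1 n \<noteq> 0" for n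
  obtain N where hN: "\<forall>n>N. greedy_digit \<beta> 1 n = 0" using gf unfolding greedy_finite_def by blast
  have P1: "P 1" using d1 unfolding P_def by simp
  have Pb: "\<And>y. P y \<Longrightarrow> y \<le> N" using hN unfolding P_def by (meson not_less)
  have LP: "P L" unfolding L_def greedy_len_def P_def[symmetric] by (rule GreatestI_nat[of P 1 N, OF P1 Pb])
  have Lmax: "greedy_digit \<beta> 1 n = 0" if "L < n" for n
  proof (rule ccontr)
    assume "greedy_digit \<beta> 1 n \<noteq> 0"
    then have "P n" using that unfolding P_def by simp
    then have "n \<le> L" unfolding L_def greedy_len_def P_def[symmetric] by (rule Greatest_le_nat[of P n N, OF _ Pb])
    then show False using that by simp
  qed
  have L1: "1 \<le> L" using LP unfolding P_def by simp
  have dL: "greedy_digit \<beta> 1 L = 1"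
  proof -
    have "greedy_digit \<beta> 1 (Suc (L - 1)) \<le> 1" by (rule gd_le1[OF bg b2])
    then show ?thesis using LP L1 unfolding P_def by simp
  qed
  have gxpow: "gx \<beta> (L + m) = \<beta> ^ m * gx \<beta> L" for m
  proof (induction m)
    case 0 then show ?case by simp
  next
    case (Suc m)
    have "greedy_digit \<beta> 1 (Suc (L + m)) = 0" by (rule Lmax) simp
    then show ?case using gx_rec[OF bg b2, of "L+m"] Suc by simp
  qed
  have gxL: "gx \<beta> L = 0"
  proof (rule ccontr)
    assume nz: "gx \<beta> L \<noteq> 0"
    then have p: "0 < gx \<beta> L" using gx_le1[OF bg b2, of L] by simp
    obtain m where m: "1 / gx \<beta> L < \<beta> ^ m" using real_arch_pow[OF bg] by blast
    then have "1 < \<beta> ^ m * gx \<beta> L" using p by (simp add: divide_less_eq)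
    then show False using gxpow[of m] gx_bounds[OF bg b2, of "L+m"] L1 by simp
  qed
  have gxpos: "0 < gx \<beta> r" if "r < L" for r
  proof (rule ccontr)
    assume "\<not> 0 < gx \<beta> r"
    then have "gx \<beta> r = 0" using gx_le1[OF bg b2, of r] by simp
    have "Suc (r + (L - Suc r)) = L" using that by simp
    with gx_zero[OF bg b2 \<open>gx \<beta> r = 0\<close>, of "L - Suc r"] have "greedy_digit \<beta> 1 L = 0"
      by simp
    then show False using dL by simp
  qed
  have eqf: "quasi_greedy \<beta> (Suc m) =
      (if Suc (m mod L) = L then greedy_digit \<beta> 1 L - 1 else greedy_digit \<beta> 1 (Suc (m mod L)))" for m
    using gf unfolding quasi_greedy_def L_def[symmetric] by (simp add: Let_def)
  define y where "y m = gx \<beta> (m mod L)" for m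
  have Lpos: "0 < L" using L1 by simp
  have ele: "quasi_greedy \<beta> (Suc n) \<le> 1" for n
    using eqf[of n] dL gd_le1[OF bg b2, of "n mod L"] by simp
  have yrec: "y (Suc m) = \<beta> * y m - real (quasi_greedy \<beta> (Suc m))" for m
  proof (cases "Suc (m mod L) = L")
    case True
    have "gx \<beta> L = \<beta> * gx \<beta> (m mod L) - 1"
      using gx_rec[OF bg b2, of "m mod L"] True dL by simp
    then show ?thesis using True gxL dL unfolding y_def eqf by (simp add: mod_Suc gx_0)
  next
    case False
    then show ?thesis using gx_rec[OF bg b2, of "m mod L"] unfolding y_def eqf by (simp add: mod_Suc)
  qed
  have ybd: "0 \<le> y n \<and> y n \<le> 1" for n unfolding y_def using gx_le1[OF bg b2] by blast
  have Qy: "Qorb \<beta> n = y n" for n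
    unfolding Qorb_def by (rule series_eq[where e="quasi_greedy \<beta>" and y=y, OF bg ele yrec ybd])
  have ypos: "0 < y n" for n unfolding y_def using gxpos Lpos by simp
  have y0: "y 0 = 1" unfolding y_def by (simp add: gx_0)
  have q0: "Qorb \<beta> 0 = 1" using Qy y0 by simp
  have qr: "Qorb \<beta> (Suc n) = \<beta> * Qorb \<beta> n - real (quasi_greedy \<beta> (Suc n))" for n
    using Qy yrec by simp
  have qp: "0 < Qorb \<beta> n" for n using Qy ypos by simp
  have ql: "Qorb \<beta> n \<le> 1" for n using Qy ybd by simp
  note M = main_comb[OF assms(1,2) q0 qr ele qp ql hk1 hkQ hki]
  define a where "a = quasi_greedy \<beta>"
  have "\<exists>n0 \<ge> 1. \<exists>a :: nat \<Rightarrow> nat. (\<forall>i\<in>{1..n0}. a i \<in> {0, 1}) \<and> a n0 = 1 \<and>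
       (\<forall>i\<ge>1. quasi_greedy \<beta> i =
          (let j = (i - 1) mod (2 * n0) + 1 in
           if j \<le> n0 then a j else 1 - a (j - n0)))"
  proof (intro exI[of _ "k+1"] conjI exI[of _ a] ballI allI impI)
    show "1 \<le> k + 1" by simp
    show "a i \<in> {0, 1}" if "i \<in> {1..k+1}" for i
      using ele[of "i - 1"] that unfolding a_def by (cases i) auto
    show "a (k + 1) = 1" using M(1) unfolding a_def by simp
    fix i :: nat assume i1: "1 \<le> i"
    define j where "j = (i - 1) mod (2 * (k + 1)) + 1"
    have ij: "quasi_greedy \<beta> i = quasi_greedy \<beta> j"
      using M(3)[of "i - 1"] i1 unfolding j_def by (simp add: algebra_simps)
    have j1: "1 \<le> j" and j2: "j \<le> 2 * (k + 1)" unfolding j_def by auto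
    show "quasi_greedy \<beta> i = (let j = (i - 1) mod (2 * (k + 1)) + 1 in
           if j \<le> k + 1 then a j else 1 - a (j - (k + 1)))"
    proof (cases "j \<le> k + 1")
      case True
      then show ?thesis using ij unfolding j_def[symmetric] Let_def a_def by simp
    next
      case False
      define t where "t = j - (k + 1)"
      have t: "1 \<le> t" "t \<le> k + 1" "j = k + 1 + t" using False j2 unfolding t_def by auto
      show ?thesis using ij M(2)[OF t(1,2)] False t(3) unfolding j_def[symmetric] Let_def a_def t_def
        by simp
    qed
  qed
  with gf show ?thesis by blast
qed

end
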